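(* Let $h,n\geq 2$ with $h\leq n!$. Then every subgroup of $S_h\times\{id\}$ is an anonymity group with respect to $(h,n)$.
   Context: Permutations compose as $(\sigma\tau)(x)=\sigma(\tau(x))$. Let $G=S_h\times S_n$ and $\mathcal{P}=(S_n)^h$ (preference profiles), with $G$ acting by $(p^{(\varphi,\psi)})_i=\psi\,p_{\varphi^{-1}(i)}$. A social preference function (SPF) is any $F:\mathcal{P}\to S_n$; its symmetry group is $G(F)=\{(\varphi,\psi)\in G: F(p^{(\varphi,\psi)})=\psi F(p)\ \forall p\}$ and its anonymity group is $G_1(F)=G(F)\cap(S_h\times\{id\})$. A subgroup $U\leq S_h\times\{id\}$ is an anonymity group with respect to $(h,n)$ if $U=G_1(F)$ for some SPF $F$. *)

theory Defs
  imports "HOL-Algebra.Sym_Groups"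
begin

text \<open>Agents are 1..h, alternatives are 1..n. A permutation of {1..k} is an element
of carrier (sym_group k) (a function nat => nat permuting {1..k}); composition is (\<circ>),
i.e. (sigma tau)(x) = sigma (tau x).\<close>

definition profiles :: "nat \<Rightarrow> nat \<Rightarrow> (nat \<Rightarrow> (nat \<Rightarrow> nat)) set" where
  "profiles h n = ({1..h} \<rightarrow>\<^sub>E carrier (sym_group n))"

definition prof_act :: "nat \<Rightarrow> (nat \<Rightarrow> nat) \<Rightarrow> (nat \<Rightarrow> nat) \<Rightarrow> (nat \<Rightarrow> (nat \<Rightarrow> nat)) \<Rightarrow> (nat \<Rightarrow> (nat \<Rightarrow> nat))" where
  "prof_act h \<phi> \<psi> p = (\<lambda>i\<in>{1..h}. \<psi> \<circ> p (inv_into {1..h} \<phi> i))"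

text \<open>Social preference functions P -> S_n (only values on profiles matter).\<close>
definition SPF :: "nat \<Rightarrow> nat \<Rightarrow> ((nat \<Rightarrow> (nat \<Rightarrow> nat)) \<Rightarrow> (nat \<Rightarrow> nat)) set" where
  "SPF h n = (profiles h n \<rightarrow> carrier (sym_group n))"

definition symmetry_group :: "nat \<Rightarrow> nat \<Rightarrow> ((nat \<Rightarrow> (nat \<Rightarrow> nat)) \<Rightarrow> (nat \<Rightarrow> nat)) \<Rightarrow> ((nat \<Rightarrow> nat) \<times> (nat \<Rightarrow> nat)) set" where
  "symmetry_group h n F = {(\<phi>, \<psi>). \<phi> \<in> carrier (sym_group h) \<and> \<psi> \<in> carrier (sym_group n) \<and>
      (\<forall>p\<in>profiles h n. F (prof_act h \<phi> \<psi> p) = \<psi> \<circ> F p)}"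

definition anonymity_group :: "nat \<Rightarrow> nat \<Rightarrow> ((nat \<Rightarrow> (nat \<Rightarrow> nat)) \<Rightarrow> (nat \<Rightarrow> nat)) \<Rightarrow> (nat \<Rightarrow> nat) set" where
  "anonymity_group h n F = {\<phi>. (\<phi>, id) \<in> symmetry_group h n F}"

definition is_anonymity_group :: "nat \<Rightarrow> nat \<Rightarrow> (nat \<Rightarrow> nat) set \<Rightarrow> bool" where
  "is_anonymity_group h n U \<longleftrightarrow> (\<exists>F\<in>SPF h n. anonymity_group h n F = U)"

end

theory Submission
  imports Defs
begin

lemma act_at:
  assumes "\<phi> permutes {1..h}" "j \<in> {1..h}"
  shows "prof_act h \<phi> \<psi> p (\<phi> j) = \<psi> \<circ> p j"
proof -
  have inj: "inj_on \<phi> {1..h}" using assms(1) permutes_inj_on by blast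
  have "\<phi> j \<in> {1..h}" by (rule permutes_in_image[OF assms(1), THEN iffD2, OF assms(2)])
  moreover have "inv_into {1..h} \<phi> (\<phi> j) = j" using inv_into_f_f[OF inj assms(2)] .
  ultimately show ?thesis unfolding prof_act_def by simp
qed

theorem mainTheorem4:
  fixes h n :: nat and U :: "(nat \<Rightarrow> nat) set"
  assumes "h \<ge> 2" and "n \<ge> 2" and "h \<le> fact n"
    and "subgroup U (sym_group h)"
  shows "is_anonymity_group h n U"
proof -
  have sub: "subgroup U (sym_group h)" by fact
  have Uperm: "\<And>u. u \<in> U \<Longrightarrow> u permutes {1..h}"
    using subgroup.subset[OF sub] sym_group_carrier by blast
  have Uid: "id \<in> U" using subgroup.one_closed[OF sub] by (simp add: sym_group_one)
  have Ucomp: "\<And>u v. u \<in> U \<Longrightarrow> v \<in> U \<Longrightarrow> u \<circ> v \<in> U"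
    using subgroup.m_closed[OF sub] by (simp add: sym_group_mult)
  have Uinv: "\<And>u. u \<in> U \<Longrightarrow> inv' u \<in> U"
  proof -
    fix u assume u: "u \<in> U"
    have "m_inv (sym_group h) u \<in> U" using subgroup.m_inv_closed[OF sub u] .
    moreover have "u \<in> carrier (sym_group h)" using u subgroup.subset[OF sub] by blast
    ultimately show "inv' u \<in> U" by simp
  qed
  have cle: "card {1..h} \<le> card (carrier (sym_group n))"
    using assms(3) by (simp add: sym_group_card_carrier)
  have fin: "finite (carrier (sym_group n))"
    using sym_group_card_carrier[of n] card_ge_0_finite fact_gt_zero by metis
  obtain f where f: "f ` {1..h} \<subseteq> carrier (sym_group n)" "inj_on f {1..h}"
    using card_le_inj[OF _ fin cle] by blast
  define p0 where "p0 = restrict f {1..h}"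
  have p0prof: "p0 \<in> profiles h n" using f unfolding p0_def profiles_def by auto
  have p0inj: "\<And>i j. i \<in> {1..h} \<Longrightarrow> j \<in> {1..h} \<Longrightarrow> p0 i = p0 j \<Longrightarrow> i = j"
    using f(2) unfolding p0_def by (auto dest: inj_onD)
  define Q where "Q = (\<lambda>p. \<exists>u\<in>U. \<forall>i\<in>{1..h}. p (u i) = p0 i)"
  define sw :: "nat \<Rightarrow> nat" where "sw = Transposition.transpose 1 2"
  define F where "F = (\<lambda>p. if Q p then id else sw)"
  have swc: "sw \<in> carrier (sym_group n)"
    unfolding sw_def sym_group_carrier using assms(2) by (intro permutes_swap_id) auto
  have idc: "id \<in> carrier (sym_group n)"
    unfolding sym_group_carrier by (rule permutes_id)
  have swid: "sw \<noteq> id"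
  proof
    assume "sw = id" hence "sw 1 = 1" by simp
    moreover have "sw 1 = 2" unfolding sw_def by simp
    ultimately show False by simp
  qed
  have FSPF: "F \<in> SPF h n" unfolding SPF_def F_def using swc idc by auto
  have "anonymity_group h n F = U"
  proof
    show "anonymity_group h n F \<subseteq> U"
    proof
      fix \<phi> assume "\<phi> \<in> anonymity_group h n F"
      hence phc: "\<phi> \<in> carrier (sym_group h)" and
        invF: "\<forall>p\<in>profiles h n. F (prof_act h \<phi> id p) = id \<circ> F p"
        unfolding anonymity_group_def symmetry_group_def by auto
      have ph: "\<phi> permutes {1..h}" using phc sym_group_carrier by blast
      show "\<phi> \<in> U"
      proof (rule ccontr)
        assume nU: "\<phi> \<notin> U"
        have "Q p0" unfolding Q_def by (rule bexI[OF _ Uid]) simp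
        hence "F (prof_act h \<phi> id p0) = id" using invF p0prof unfolding F_def by auto
        hence "Q (prof_act h \<phi> id p0)" unfolding F_def using swid by (auto split: if_splits)
        then obtain u where u: "u \<in> U" and
          hu: "\<forall>i\<in>{1..h}. prof_act h \<phi> id p0 (u i) = p0 i" unfolding Q_def by auto
        have up: "u permutes {1..h}" using Uperm u by blast
        have "u = \<phi>"
        proof
          fix x
          show "u x = \<phi> x"
          proof (cases "x \<in> {1..h}")
            case False thus ?thesis using permutes_not_in[OF up False] permutes_not_in[OF ph False] by simp
          next
            case True
            define j where "j = inv' \<phi> (u x)"
            have ux: "u x \<in> {1..h}" by (rule permutes_in_image[OF up, THEN iffD2, OF True])
            have j: "j \<in> {1..h}" unfolding j_def by (rule permutes_in_image[OF permutes_inv[OF ph], THEN iffD2, OF ux])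
            have phj: "\<phi> j = u x" unfolding j_def by (simp add: permutes_inverses(1)[OF ph])
            have "p0 j = p0 x" using act_at[OF ph j, of id p0] hu True phj by simp
            hence "j = x" using p0inj j True by blast
            thus ?thesis using phj by simp
          qed
        qed
        thus False using u nU by simp
      qed
    qed
  next
    show "U \<subseteq> anonymity_group h n F"
    proof
      fix \<phi> assume phU: "\<phi> \<in> U"
      have ph: "\<phi> permutes {1..h}" using Uperm phU by blast
      have "Q (prof_act h \<phi> id p) = Q p" for p
      proof
        assume "Q (prof_act h \<phi> id p)"
        then obtain u where u: "u \<in> U" and
          hu: "\<forall>i\<in>{1..h}. prof_act h \<phi> id p (u i) = p0 i" unfolding Q_def by auto
        have "\<forall>i\<in>{1..h}. p ((inv' \<phi> \<circ> u) i) = p0 i"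
        proof
          fix i assume i: "i \<in> {1..h}"
          have ui: "u i \<in> {1..h}" by (rule permutes_in_image[OF Uperm[OF u], THEN iffD2, OF i])
          have j: "inv' \<phi> (u i) \<in> {1..h}" by (rule permutes_in_image[OF permutes_inv[OF ph], THEN iffD2, OF ui])
          have "\<phi> (inv' \<phi> (u i)) = u i" by (simp add: permutes_inverses(1)[OF ph])
          thus "p ((inv' \<phi> \<circ> u) i) = p0 i" using act_at[OF ph j, of id p] hu i by simp
        qed
        thus "Q p" unfolding Q_def using Ucomp[OF Uinv[OF phU] u] by blast
      next
        assume "Q p"
        then obtain u where u: "u \<in> U" and hu: "\<forall>i\<in>{1..h}. p (u i) = p0 i" unfolding Q_def by auto
        have "\<forall>i\<in>{1..h}. prof_act h \<phi> id p ((\<phi> \<circ> u) i) = p0 i"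
        proof
          fix i assume i: "i \<in> {1..h}"
          have ui: "u i \<in> {1..h}" by (rule permutes_in_image[OF Uperm[OF u], THEN iffD2, OF i])
          show "prof_act h \<phi> id p ((\<phi> \<circ> u) i) = p0 i" using act_at[OF ph ui, of id p] hu i by simp
        qed
        thus "Q (prof_act h \<phi> id p)" unfolding Q_def using Ucomp[OF phU u] by blast
      qed
      hence "\<forall>p\<in>profiles h n. F (prof_act h \<phi> id p) = id \<circ> F p" unfolding F_def by simp
      moreover have "\<phi> \<in> carrier (sym_group h)" using ph sym_group_carrier by blast
      ultimately show "\<phi> \<in> anonymity_group h n F"
        unfolding anonymity_group_def symmetry_group_def using idc by auto
    qed
  qed
  thus ?thesis unfolding is_anonymity_group_def using FSPF by blast
qed

end
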